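(* Let $\ell,m,n$ be positive integers with $\ell<n$, $m<n$, $\gcd(m,n)=1$, and let $d\in\{1,\dots,n-1\}$ be the multiplicative inverse of $m$ modulo $n$. If $\ell\ne1$ then $$\mathcal{F}[\ell,m,n]^{\overline{(\ell-1)d}}=\mathcal{F}[\ell-1,m,n],\qquad \mathcal{F}[\ell,m,n]^{\overline{0}}=\mathcal{F}[\ell-1,m,n]^{(-d)},$$ and if $\ell\ne n-1$ then $$\mathcal{F}[\ell,m,n]^{\overline{\ell d}}=\mathcal{F}[\ell+1,m,n],\qquad \mathcal{F}[\ell,m,n]^{\overline{-d}}=\mathcal{F}[\ell+1,m,n]^{(d)}.$$
   Context: For positive integers $\ell<n$, $m<n$ with $\gcd(m,n)=1$, $\mathcal{F}[\ell,m,n]:\mathbb{Z}\to\{L,R\}$ is defined by $\mathcal{F}[\ell,m,n]_i=L$ if $im\bmod n<\ell$ and $R$ if $im \bmod n\ge\ell$; it is periodic with period $n$. For a sequence $\mathcal{S}$ of period $n$ and $j\in\mathbb{Z}$: $\mathcal{S}^{(j)}$ is the $j$-th left shift, $\mathcal{S}^{(j)}_i=\mathcal{S}_{i+j}$; $\mathcal{S}^{\overline j}$ is the sequence that differs from $\mathcal{S}$ exactly at the indices $j+kn$, $k\in\mathbb{Z}$ (the symbol $L$ is swapped with $R$ there). Indices such as $-d$ and $(\ell-1)d$ are taken modulo $n$. *)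

theory Defs
  imports Main
begin

datatype LR = L | R

fun swapLR :: "LR \<Rightarrow> LR" where
  "swapLR L = R" | "swapLR R = L"

definition Fseq :: "int \<Rightarrow> int \<Rightarrow> int \<Rightarrow> int \<Rightarrow> LR" where
  "Fseq l m n i = (if (i * m) mod n < l then L else R)"

definition lshift :: "(int \<Rightarrow> LR) \<Rightarrow> int \<Rightarrow> int \<Rightarrow> LR" where
  "lshift S j = (\<lambda>i. S (i + j))"

text \<open>S^{bar j} for a sequence of period n: swap L/R exactly at indices j + k n.\<close>
definition flipAt :: "int \<Rightarrow> (int \<Rightarrow> LR) \<Rightarrow> int \<Rightarrow> int \<Rightarrow> LR" where
  "flipAt n S j = (\<lambda>i. if i mod n = j mod n then swapLR (S i) else S i)"

end

theory Submission
  imports Defs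
begin

lemma key:
  fixes m n d i j :: int
  assumes "0 < n" "(m * d) mod n = 1 mod n"
  shows "(i mod n = j mod n) = ((i*m) mod n = (j*m) mod n)"
proof
  assume "i mod n = j mod n" thus "(i*m) mod n = (j*m) mod n" by (metis mod_mult_left_eq)
next
  assume h: "(i*m) mod n = (j*m) mod n"
  have "(i*m*d) mod n = (j*m*d) mod n" using h by (metis mod_mult_left_eq)
  moreover have "(i*m*d) mod n = i mod n"
    by (metis assms(2) mod_mult_right_eq mult.assoc mult.right_neutral)
  moreover have "(j*m*d) mod n = j mod n"
    by (metis assms(2) mod_mult_right_eq mult.assoc mult.right_neutral)
  ultimately show "i mod n = j mod n" by simp
qed

lemma shiftp:
  fixes m n d i :: int
  assumes "0 < n" "(m * d) mod n = 1 mod n"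
  shows "((i+d)*m) mod n = ((i*m) mod n + 1) mod n"
proof -
  have "((i+d)*m) mod n = (i*m + (m*d) mod n) mod n"
    by (metis distrib_right mod_add_right_eq mult.commute)
  also have "\<dots> = ((i*m) mod n + 1) mod n" using assms by (metis mod_add_eq mod_mod_trivial)
  finally show ?thesis .
qed

lemma shiftm:
  fixes m n d i :: int
  assumes "0 < n" "(m * d) mod n = 1 mod n"
  shows "((i-d)*m) mod n = ((i*m) mod n - 1) mod n"
proof -
  have "(i*m) mod n = (((i-d)*m) mod n + 1) mod n" using shiftp[OF assms, of "i-d"] by simp
  thus ?thesis by (metis add_diff_cancel_right' mod_diff_left_eq mod_mod_trivial)
qed

theorem proposition3p1:
  fixes l m n d :: int
  assumes "0 < l" "l < n" "0 < m" "m < n" "gcd m n = 1"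
    and "1 \<le> d" "d \<le> n - 1" "(m * d) mod n = 1 mod n"
  shows "(l \<noteq> 1 \<longrightarrow>
            flipAt n (Fseq l m n) ((l - 1) * d) = Fseq (l - 1) m n \<and>
            flipAt n (Fseq l m n) 0 = lshift (Fseq (l - 1) m n) (- d)) \<and>
         (l \<noteq> n - 1 \<longrightarrow>
            flipAt n (Fseq l m n) (l * d) = Fseq (l + 1) m n \<and>
            flipAt n (Fseq l m n) (- d) = lshift (Fseq (l + 1) m n) d)"
proof -
  have n: "0 < n" using assms by simp
  note K = key[OF n assms(8)]
  have r1: "(k * d * m) mod n = k mod n" for k
    by (metis assms(8) mod_mult_right_eq mult.assoc mult.commute mult.right_neutral)
  have rl1: "((l-1)*d*m) mod n = l - 1" using r1[of "l-1"] assms by simp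
  have rl: "(l*d*m) mod n = l" using r1[of l] assms by simp
  have r0: "(0*m) mod n = 0" by simp
  have rmd: "((-d)*m) mod n = n - 1"
    using shiftm[OF n assms(8), of 0] n by (simp add: zmod_minus1)
  have b: "0 \<le> (i*m) mod n" "(i*m) mod n < n" for i using n by auto
  show ?thesis
  proof (intro conjI impI)
    show "flipAt n (Fseq l m n) ((l - 1) * d) = Fseq (l - 1) m n"
    proof
      fix i show "flipAt n (Fseq l m n) ((l - 1) * d) i = Fseq (l - 1) m n i"
        unfolding flipAt_def Fseq_def using K[of i "(l-1)*d"] rl1 by auto
    qed
    show "flipAt n (Fseq l m n) (l * d) = Fseq (l + 1) m n"
    proof
      fix i show "flipAt n (Fseq l m n) (l * d) i = Fseq (l + 1) m n i"
        unfolding flipAt_def Fseq_def using K[of i "l*d"] rl by auto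
    qed
    show "flipAt n (Fseq l m n) 0 = lshift (Fseq (l - 1) m n) (- d)"
    proof
      fix i
      have s: "((i + - d)*m) mod n = ((i*m) mod n - 1) mod n"
        using shiftm[OF n assms(8), of i] by simp
      show "flipAt n (Fseq l m n) 0 i = lshift (Fseq (l - 1) m n) (- d) i"
      proof (cases "(i*m) mod n = 0")
        case True
        then show ?thesis unfolding flipAt_def Fseq_def lshift_def
          using K[of i 0] s assms by (simp add: zmod_minus1)
      next
        case False
        then have "((i*m) mod n - 1) mod n = (i*m) mod n - 1" using b[of i] by simp
        then show ?thesis unfolding flipAt_def Fseq_def lshift_def
          using K[of i 0] s False by auto
      qed
    qed
    assume "l \<noteq> n - 1"
    show "flipAt n (Fseq l m n) (- d) = lshift (Fseq (l + 1) m n) d"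
    proof
      fix i
      have s: "((i + d)*m) mod n = ((i*m) mod n + 1) mod n"
        using shiftp[OF n assms(8), of i] by simp
      show "flipAt n (Fseq l m n) (- d) i = lshift (Fseq (l + 1) m n) d i"
      proof (cases "(i*m) mod n = n - 1")
        case True
        then show ?thesis unfolding flipAt_def Fseq_def lshift_def
          using K[of i "-d"] s assms rmd by simp
      next
        case False
        then have "((i*m) mod n + 1) mod n = (i*m) mod n + 1" using b[of i] by simp
        then show ?thesis unfolding flipAt_def Fseq_def lshift_def
          using K[of i "-d"] s False rmd by auto
      qed
    qed
  qed
qed

end
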